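(* In the binary setting below, with $\mathrm{CL}_{\mathrm{induced}}:=-\mathbb{E}[\mathrm{Var}(S-C\mid S_B)]$ and $\mathrm{GL}_{\mathrm{induced}}:=\mathbb{E}[\mathrm{Var}(C\mid S_B)]$, $$-\mathbb{E}\Big[\sqrt{\mathrm{Var}(S\mid S_B)}\big(2\sqrt{C_B(1-C_B)}+\sqrt{\mathrm{Var}(S\mid S_B)}\big)\Big]\le\mathrm{CL}_{\mathrm{induced}}+\mathrm{GL}_{\mathrm{induced}}\le\mathbb{E}\Big[\sqrt{\mathrm{Var}(S\mid S_B)}\big(2\sqrt{C_B(1-C_B)}-\sqrt{\mathrm{Var}(S\mid S_B)}\big)\Big].$$ With $N$ equal-width bins, $$-\tfrac1N\mathbb{E}\big[\sqrt{C_B(1-C_B)}\big]-\tfrac{1}{4N^2}\le\mathrm{CL}_{\mathrm{induced}}+\mathrm{GL}_{\mathrm{induced}}\le\tfrac1N\mathbb{E}\big[\sqrt{C_B(1-C_B)}\big].$$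
   Context: Binary setting: $(X,Y)$ jointly distributed with $Y\in\{0,1\}$; $Q:=P(Y=1\mid X)$; $S=f(X)\in[0,1]$ is a classifier's confidence for the positive class; $C:=\mathbb{E}[Q\mid S]$. Given a partition of $[0,1]$ into interval bins $\mathcal{B}_j$, $S_B$ equals $\mathbb{E}[S\mid S\in\mathcal{B}_j]$ on $\{S\in\mathcal{B}_j\}$, and $C_B:=\mathbb{E}[Q\mid S_B]=\mathbb{E}[C\mid S_B]$. $\mathrm{Var}(\cdot\mid S_B)$ is the ordinary conditional variance. "$N$ equal-width bins" means the bins are the intervals of length $1/N$ partitioning $[0,1]$. *)

theory Defs
  imports "HOL-Probability.Probability"
begin

definition gen_sigma :: "'a measure \<Rightarrow> ('a \<Rightarrow> real) \<Rightarrow> 'a measure" where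
  "gen_sigma M Z = vimage_algebra (space M) Z borel"

definition cond_var :: "'a measure \<Rightarrow> 'a measure \<Rightarrow> ('a \<Rightarrow> real) \<Rightarrow> ('a \<Rightarrow> real)" where
  "cond_var M F Z = real_cond_exp M F (\<lambda>w. (Z w - real_cond_exp M F Z w)\<^sup>2)"

definition bin_partition :: "real set set \<Rightarrow> bool" where
  "bin_partition \<B> \<longleftrightarrow> finite \<B> \<and> (\<forall>B\<in>\<B>. is_interval B \<and> B \<noteq> {}) \<and>
     disjoint \<B> \<and> \<Union>\<B> = {0..1}"

definition bin_mean :: "'a measure \<Rightarrow> ('a \<Rightarrow> real) \<Rightarrow> real set \<Rightarrow> real" where
  "bin_mean M S B = (LINT w:(S -` B \<inter> space M)|M. S w) / measure M (S -` B \<inter> space M)"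

definition binned :: "'a measure \<Rightarrow> real set set \<Rightarrow> ('a \<Rightarrow> real) \<Rightarrow> 'a \<Rightarrow> real" where
  "binned M \<B> S w = bin_mean M S (THE B. B \<in> \<B> \<and> S w \<in> B)"

end

theory Submission imports Defs begin


lemma quad_disc:
  fixes A K V :: real
  assumes h: "\<forall>t\<in>\<rat>. 0 \<le> A + 2*t*K + t^2*V" and V: "0 \<le> V"
  shows "K^2 \<le> A*V"
proof -
  have cl: "closed {t::real. 0 \<le> A + 2*t*K + t^2*V}"
    by (intro closed_Collect_le continuous_intros)
  have "closure \<rat> \<subseteq> {t::real. 0 \<le> A + 2*t*K + t^2*V}"
    by (rule closure_minimal[OF _ cl]) (use h in auto)
  then have all: "\<And>t. 0 \<le> A + 2*t*K + t^2*V"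
    using Rats_closure_real by auto
  show ?thesis
  proof (cases "V = 0")
    case True
    show ?thesis
    proof (cases "K = 0")
      case False
      have "0 \<le> A + 2*(-(A+1)/(2*K))*K + (-(A+1)/(2*K))^2*V" by (rule all)
      with True False show ?thesis by (simp add: field_simps)
    qed (simp add: True)
  next
    case False
    then have Vp: "V > 0" using V by auto
    have "0 \<le> A + 2*(-K/V)*K + (-K/V)^2*V" by (rule all)
    also have "\<dots> = A - K^2/V" using Vp by (simp add: field_simps power2_eq_square)
    finally have "K^2/V \<le> A" by simp
    then show ?thesis using Vp by (simp add: field_simps)
  qed
qed



lemma var_decomp:
  assumes P: "prob_space M" and sub: "subalgebra M G"
    and Sm[measurable]: "S \<in> borel_measurable M" and Cm[measurable]: "C \<in> borel_measurable M"
    and Sb: "AE w in M. 0 \<le> S w \<and> S w \<le> 1" and Cb: "AE w in M. 0 \<le> C w \<and> C w \<le> 1"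
  defines "K \<equiv> real_cond_exp M G (\<lambda>w. (S w - real_cond_exp M G S w) * (C w - real_cond_exp M G C w))"
  shows "integrable M (cond_var M G S)" "integrable M K"
    "(\<integral>w. cond_var M G C w \<partial>M) - (\<integral>w. cond_var M G (\<lambda>v. S v - C v) w \<partial>M)
       = (\<integral>w. 2 * K w - cond_var M G S w \<partial>M)"
    "AE w in M. 0 \<le> cond_var M G S w \<and> cond_var M G S w \<le> 1 \<and>
        0 \<le> cond_var M G C w \<and> K w ^ 2 \<le> cond_var M G S w * cond_var M G C w"
    "AE w in M. cond_var M G C w \<le> real_cond_exp M G C w * (1 - real_cond_exp M G C w) \<and>
        0 \<le> real_cond_exp M G C w \<and> real_cond_exp M G C w \<le> 1"
proof -
  interpret P: prob_space M by fact
  interpret G: finite_measure_subalgebra M G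
    using sub by (simp add: finite_measure_subalgebra_def finite_measure_subalgebra_axioms_def P.finite_measure_axioms)
  define eS where "eS = real_cond_exp M G S"
  define eC where "eC = real_cond_exp M G C"
  define a where "a w = S w - eS w" for w
  define b where "b w = C w - eC w" for w
  have eSm[measurable]: "eS \<in> borel_measurable M" and eCm[measurable]: "eC \<in> borel_measurable M"
    unfolding eS_def eC_def by auto
  have am[measurable]: "a \<in> borel_measurable M" and bm[measurable]: "b \<in> borel_measurable M"
    unfolding a_def b_def by auto
  have intS: "integrable M S"
    by (rule P.integrable_const_bound[where B=1]) (use Sb in auto)
  have intC: "integrable M C"
    by (rule P.integrable_const_bound[where B=1]) (use Cb in auto)
  have "AE w in M. 0 \<le> eS w" unfolding eS_def
    by (rule G.real_cond_exp_ge_c[OF intS]) (use Sb in auto)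
  moreover have "AE w in M. eS w \<le> 1" unfolding eS_def
    by (rule G.real_cond_exp_le_c[OF intS]) (use Sb in auto)
  ultimately have eSb: "AE w in M. 0 \<le> eS w \<and> eS w \<le> 1" by eventually_elim auto
  have "AE w in M. 0 \<le> eC w" unfolding eC_def
    by (rule G.real_cond_exp_ge_c[OF intC]) (use Cb in auto)
  moreover have "AE w in M. eC w \<le> 1" unfolding eC_def
    by (rule G.real_cond_exp_le_c[OF intC]) (use Cb in auto)
  ultimately have eCb: "AE w in M. 0 \<le> eC w \<and> eC w \<le> 1" by eventually_elim auto
  have ab: "AE w in M. \<bar>a w\<bar> \<le> 1 \<and> \<bar>b w\<bar> \<le> 1"
    using eSb eCb Sb Cb unfolding a_def b_def by eventually_elim auto
  have ab2: "AE w in M. (a w)^2 \<le> 1 \<and> (b w)^2 \<le> 1 \<and> \<bar>a w * b w\<bar> \<le> 1 \<and> (a w - b w)^2 \<le> 4"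
    using ab
  proof eventually_elim
    case (elim w)
    have 1: "(a w)^2 \<le> 1" "(b w)^2 \<le> 1" using elim by (auto simp: abs_square_le_1)
    have 2: "\<bar>a w * b w\<bar> \<le> 1" using elim by (auto simp: abs_mult intro: mult_le_one)
    have "\<bar>a w - b w\<bar> \<le> 2" using elim by auto
    then have "\<bar>a w - b w\<bar>^2 \<le> 2^2" by (intro power_mono) auto
    then have 3: "(a w - b w)^2 \<le> 4" by simp
    show ?case using 1 2 3 by auto
  qed
  have inta2: "integrable M (\<lambda>w. (a w)^2)"
    by (rule P.integrable_const_bound[where B=1]) (use ab2 in auto)
  have intb2: "integrable M (\<lambda>w. (b w)^2)"
    by (rule P.integrable_const_bound[where B=1]) (use ab2 in auto)
  have intab: "integrable M (\<lambda>w. a w * b w)"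
    by (rule P.integrable_const_bound[where B=1]) (use ab2 in auto)
  have VS: "cond_var M G S = real_cond_exp M G (\<lambda>w. (a w)^2)"
    unfolding cond_var_def a_def eS_def ..
  have VC: "cond_var M G C = real_cond_exp M G (\<lambda>w. (b w)^2)"
    unfolding cond_var_def b_def eC_def ..
  have Kd: "K = real_cond_exp M G (\<lambda>w. a w * b w)"
    unfolding K_def a_def b_def eS_def eC_def ..
  show iVS: "integrable M (cond_var M G S)" unfolding VS using G.real_cond_exp_int(1)[OF inta2] .
  show iK: "integrable M K" unfolding Kd using G.real_cond_exp_int(1)[OF intab] .
  have IVS: "(\<integral>w. cond_var M G S w \<partial>M) = (\<integral>w. (a w)^2 \<partial>M)"
    unfolding VS using G.real_cond_exp_int(2)[OF inta2] .
  have IVC: "(\<integral>w. cond_var M G C w \<partial>M) = (\<integral>w. (b w)^2 \<partial>M)"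
    unfolding VC using G.real_cond_exp_int(2)[OF intb2] .
  have IK: "(\<integral>w. K w \<partial>M) = (\<integral>w. a w * b w \<partial>M)"
    unfolding Kd using G.real_cond_exp_int(2)[OF intab] .
  have eD: "AE w in M. real_cond_exp M G (\<lambda>v. S v - C v) w = eS w - eC w"
    unfolding eS_def eC_def by (rule G.real_cond_exp_diff[OF intS intC])
  have aeD: "AE w in M. (S w - C w - real_cond_exp M G (\<lambda>v. S v - C v) w)^2 = (a w - b w)^2"
    using eD
  proof eventually_elim
    case (elim w)
    then have "S w - C w - real_cond_exp M G (\<lambda>v. S v - C v) w = a w - b w"
      unfolding a_def b_def by simp
    then show ?case by simp
  qed
  have intamb: "integrable M (\<lambda>w. (a w - b w)^2)"
    by (rule P.integrable_const_bound[where B=4]) (use ab2 in auto)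
  have intD: "integrable M (\<lambda>w. (S w - C w - real_cond_exp M G (\<lambda>v. S v - C v) w)^2)"
    using integrable_cong_AE[OF _ _ aeD] intamb by simp
  have IVD: "(\<integral>w. cond_var M G (\<lambda>v. S v - C v) w \<partial>M) = (\<integral>w. (a w - b w)^2 \<partial>M)"
    unfolding cond_var_def using G.real_cond_exp_int(2)[OF intD] integral_cong_AE[OF _ _ aeD] by simp
  have "(\<integral>w. (a w - b w)^2 \<partial>M) = (\<integral>w. (a w)^2 - 2 * (a w * b w) + (b w)^2 \<partial>M)"
    by (simp add: power2_diff algebra_simps)
  also have "\<dots> = (\<integral>w. (a w)^2 \<partial>M) - 2 * (\<integral>w. a w * b w \<partial>M) + (\<integral>w. (b w)^2 \<partial>M)"
    using inta2 intab intb2 by simp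
  finally have E1: "(\<integral>w. (a w - b w)^2 \<partial>M) = (\<integral>w. (a w)^2 \<partial>M) - 2 * (\<integral>w. a w * b w \<partial>M) + (\<integral>w. (b w)^2 \<partial>M)" .
  have "(\<integral>w. 2 * K w - cond_var M G S w \<partial>M) = 2 * (\<integral>w. K w \<partial>M) - (\<integral>w. cond_var M G S w \<partial>M)"
    using iK iVS by simp
  then show "(\<integral>w. cond_var M G C w \<partial>M) - (\<integral>w. cond_var M G (\<lambda>v. S v - C v) w \<partial>M)
       = (\<integral>w. 2 * K w - cond_var M G S w \<partial>M)"
    using IVS IVC IK IVD E1 by simp
  show "AE w in M. 0 \<le> cond_var M G S w \<and> cond_var M G S w \<le> 1 \<and>
        0 \<le> cond_var M G C w \<and> K w ^ 2 \<le> cond_var M G S w * cond_var M G C w"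
  proof -
    have p1: "AE w in M. 0 \<le> cond_var M G S w" unfolding VS
      by (rule G.real_cond_exp_pos) auto
    have p2: "AE w in M. cond_var M G S w \<le> 1" unfolding VS
      by (rule G.real_cond_exp_le_c[OF inta2]) (use ab2 in auto)
    have p3: "AE w in M. 0 \<le> cond_var M G C w" unfolding VC
      by (rule G.real_cond_exp_pos) auto
    have q: "AE w in M. 0 \<le> cond_var M G S w + 2*t*K w + t^2 * cond_var M G C w" for t :: real
    proof -
      have i1: "integrable M (\<lambda>w. 2*t*(a w * b w))" using intab by simp
      have i2: "integrable M (\<lambda>w. t^2*(b w)^2)" using intb2 by simp
      have e1: "AE w in M. real_cond_exp M G (\<lambda>w. (a w)^2 + (2*t*(a w * b w) + t^2*(b w)^2)) w
          = real_cond_exp M G (\<lambda>w. (a w)^2) w + real_cond_exp M G (\<lambda>w. 2*t*(a w * b w) + t^2*(b w)^2) w"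
        by (rule G.real_cond_exp_add[OF inta2]) (use i1 i2 in auto)
      have e2: "AE w in M. real_cond_exp M G (\<lambda>w. 2*t*(a w * b w) + t^2*(b w)^2) w
          = real_cond_exp M G (\<lambda>w. 2*t*(a w * b w)) w + real_cond_exp M G (\<lambda>w. t^2*(b w)^2) w"
        by (rule G.real_cond_exp_add[OF i1 i2])
      have e3: "AE w in M. real_cond_exp M G (\<lambda>w. 2*t*(a w * b w)) w = 2*t * K w"
        unfolding Kd by (rule G.real_cond_exp_cmult[OF intab])
      have e4: "AE w in M. real_cond_exp M G (\<lambda>w. t^2*(b w)^2) w = t^2 * cond_var M G C w"
        unfolding VC by (rule G.real_cond_exp_cmult[OF intb2])
      have fe: "(\<lambda>w. (a w + t * b w)^2) = (\<lambda>w. (a w)^2 + (2*t*(a w * b w) + t^2*(b w)^2))"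
        by (auto simp: power2_sum power_mult_distrib algebra_simps)
      have e5: "AE w in M. 0 \<le> real_cond_exp M G (\<lambda>w. (a w)^2 + (2*t*(a w * b w) + t^2*(b w)^2)) w"
        unfolding fe[symmetric] by (rule G.real_cond_exp_pos) auto
      show ?thesis using e1 e2 e3 e4 e5 unfolding VS[symmetric]
        by eventually_elim simp
    qed
    have "AE w in M. \<forall>t\<in>\<rat>. 0 \<le> cond_var M G S w + 2*t*K w + t^2 * cond_var M G C w"
      using q by (subst AE_ball_countable[OF countable_rat]) auto
    then show ?thesis using p1 p2 p3
      by eventually_elim (auto intro: quad_disc)
  qed
  show "AE w in M. cond_var M G C w \<le> real_cond_exp M G C w * (1 - real_cond_exp M G C w) \<and>
        0 \<le> real_cond_exp M G C w \<and> real_cond_exp M G C w \<le> 1"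
  proof -
    have eCG[measurable]: "eC \<in> borel_measurable G" unfolding eC_def by simp
    have eC2G: "(\<lambda>w. (eC w)^2) \<in> borel_measurable G" by measurable
    have ieCC: "integrable M (\<lambda>w. eC w * C w)"
      by (rule P.integrable_const_bound[where B=1]) (use eCb Cb in \<open>eventually_elim, auto simp: abs_mult intro: mult_le_one\<close>)
    have ieC2: "integrable M (\<lambda>w. (eC w)^2)"
      by (rule P.integrable_const_bound[where B=1]) (use eCb in \<open>eventually_elim, auto simp: abs_square_le_1\<close>)
    have i3: "integrable M (\<lambda>w. 2 * (eC w * C w))" using ieCC by simp
    have i4: "integrable M (\<lambda>w. C w - 2 * (eC w * C w))" using intC i3 by simp
    define h where "h w = (C w - 2 * (eC w * C w)) + (eC w)^2" for w
    have ih: "integrable M h" unfolding h_def using i4 ieC2 by simp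
    have f1: "AE w in M. real_cond_exp M G h w
        = real_cond_exp M G (\<lambda>w. C w - 2 * (eC w * C w)) w + real_cond_exp M G (\<lambda>w. (eC w)^2) w"
      unfolding h_def by (rule G.real_cond_exp_add[OF i4 ieC2])
    have f2: "AE w in M. real_cond_exp M G (\<lambda>w. C w - 2 * (eC w * C w)) w
        = real_cond_exp M G C w - real_cond_exp M G (\<lambda>w. 2 * (eC w * C w)) w"
      by (rule G.real_cond_exp_diff[OF intC i3])
    have f3: "AE w in M. real_cond_exp M G (\<lambda>w. 2 * (eC w * C w)) w = 2 * real_cond_exp M G (\<lambda>w. eC w * C w) w"
      by (rule G.real_cond_exp_cmult[OF ieCC])
    have f4: "AE w in M. real_cond_exp M G (\<lambda>w. eC w * C w) w = eC w * real_cond_exp M G C w"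
      by (rule G.real_cond_exp_mult) (use ieCC in auto)
    have f5: "AE w in M. real_cond_exp M G (\<lambda>w. (eC w)^2) w = (eC w)^2"
      by (rule G.real_cond_exp_F_meas[OF ieC2 eC2G])
    have le: "AE w in M. (b w)^2 \<le> h w"
      using Cb
    proof eventually_elim
      case (elim w)
      then have "(C w)^2 \<le> C w" by (simp add: power2_eq_square mult_le_one mult_left_le)
      then show ?case unfolding b_def h_def by (simp add: power2_diff algebra_simps)
    qed
    have f6: "AE w in M. cond_var M G C w \<le> real_cond_exp M G h w"
      unfolding VC by (rule G.real_cond_exp_mono[OF le intb2 ih])
    show ?thesis using f1 f2 f3 f4 f5 f6 eCb unfolding eC_def[symmetric]
      by eventually_elim (simp add: algebra_simps power2_eq_square)
  qed
qed



lemma sq_le: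
  fixes x R :: real
  assumes "\<bar>x\<bar> \<le> R"
  shows "x^2 \<le> R*R"
proof -
  have "\<bar>x\<bar> * \<bar>x\<bar> \<le> R*R" using assms by (intro mult_mono) auto
  then show ?thesis by (simp add: power2_eq_square abs_mult)
qed

lemma var_bound:
  assumes P: "prob_space M" and sub: "subalgebra M G"
    and Sm[measurable]: "S \<in> borel_measurable M"
    and Sb: "AE w in M. 0 \<le> S w \<and> S w \<le> 1"
    and mG[measurable]: "m \<in> borel_measurable G"
    and md: "AE w in M. \<bar>S w - m w\<bar> \<le> d"
  shows "AE w in M. cond_var M G S w \<le> d^2"
proof -
  interpret P: prob_space M by fact
  interpret G: finite_measure_subalgebra M G
    using sub by (simp add: finite_measure_subalgebra_def finite_measure_subalgebra_axioms_def P.finite_measure_axioms)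
  have mM[measurable]: "m \<in> borel_measurable M" using measurable_from_subalg[OF G.subalg mG] .
  define eS where "eS = real_cond_exp M G S"
  define u where "u w = m w - eS w" for w
  have eSG[measurable]: "eS \<in> borel_measurable G" unfolding eS_def by simp
  have uG[measurable]: "u \<in> borel_measurable G" unfolding u_def by measurable
  have uM[measurable]: "u \<in> borel_measurable M" using measurable_from_subalg[OF G.subalg uG] .
  have intS: "integrable M S"
    by (rule P.integrable_const_bound[where B=1]) (use Sb in auto)
  have "AE w in M. 0 \<le> eS w" unfolding eS_def
    by (rule G.real_cond_exp_ge_c[OF intS]) (use Sb in auto)
  moreover have "AE w in M. eS w \<le> 1" unfolding eS_def
    by (rule G.real_cond_exp_le_c[OF intS]) (use Sb in auto)
  ultimately have eSb: "AE w in M. 0 \<le> eS w \<and> eS w \<le> 1" by eventually_elim auto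
  have d0: "AE w in M. 0 \<le> d" using md by eventually_elim auto
  define R where "R = 2 + \<bar>d\<bar>"
  have bnd: "AE w in M. \<bar>S w - m w\<bar> \<le> R \<and> \<bar>u w\<bar> \<le> R \<and> \<bar>m w\<bar> \<le> R"
    using md Sb eSb unfolding u_def R_def by eventually_elim auto
  have R0: "0 \<le> R" unfolding R_def by simp
  have im: "integrable M m"
    by (rule P.integrable_const_bound[where B=R]) (use bnd in auto)
  have iSm: "integrable M (\<lambda>w. S w - m w)" using intS im by simp
  have iSm2: "integrable M (\<lambda>w. (S w - m w)^2)"
  proof (rule P.integrable_const_bound[where B="R*R"])
    show "AE w in M. norm ((S w - m w)^2) \<le> R*R" using bnd
      by eventually_elim (auto intro: sq_le)
  qed simp
  have iu2: "integrable M (\<lambda>w. (u w)^2)"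
  proof (rule P.integrable_const_bound[where B="R*R"])
    show "AE w in M. norm ((u w)^2) \<le> R*R" using bnd
      by eventually_elim (auto intro: sq_le)
  qed simp
  have iuSm: "integrable M (\<lambda>w. u w * (S w - m w))"
  proof (rule P.integrable_const_bound[where B="R*R"])
    show "AE w in M. norm (u w * (S w - m w)) \<le> R*R" using bnd
      by eventually_elim (auto simp: abs_mult intro: mult_mono)
  qed simp
  have i2: "integrable M (\<lambda>w. 2 * (u w * (S w - m w)))" using iuSm by simp
  have i3: "integrable M (\<lambda>w. 2 * (u w * (S w - m w)) + (u w)^2)" using i2 iu2 by simp
  have fe: "cond_var M G S = real_cond_exp M G (\<lambda>w. (S w - m w)^2 + (2 * (u w * (S w - m w)) + (u w)^2))"
    unfolding cond_var_def eS_def[symmetric]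
    by (rule arg_cong[where f="real_cond_exp M G"]) (auto simp: u_def power2_eq_square algebra_simps)
  have f1: "AE w in M. real_cond_exp M G (\<lambda>w. (S w - m w)^2 + (2 * (u w * (S w - m w)) + (u w)^2)) w
      = real_cond_exp M G (\<lambda>w. (S w - m w)^2) w + real_cond_exp M G (\<lambda>w. 2 * (u w * (S w - m w)) + (u w)^2) w"
    by (rule G.real_cond_exp_add[OF iSm2 i3])
  have f2: "AE w in M. real_cond_exp M G (\<lambda>w. 2 * (u w * (S w - m w)) + (u w)^2) w
      = real_cond_exp M G (\<lambda>w. 2 * (u w * (S w - m w))) w + real_cond_exp M G (\<lambda>w. (u w)^2) w"
    by (rule G.real_cond_exp_add[OF i2 iu2])
  have f3: "AE w in M. real_cond_exp M G (\<lambda>w. 2 * (u w * (S w - m w))) w = 2 * real_cond_exp M G (\<lambda>w. u w * (S w - m w)) w"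
    by (rule G.real_cond_exp_cmult[OF iuSm])
  have f4: "AE w in M. real_cond_exp M G (\<lambda>w. u w * (S w - m w)) w = u w * real_cond_exp M G (\<lambda>w. S w - m w) w"
    by (rule G.real_cond_exp_mult) (use iuSm in auto)
  have f5: "AE w in M. real_cond_exp M G (\<lambda>w. S w - m w) w = eS w - real_cond_exp M G m w"
    unfolding eS_def by (rule G.real_cond_exp_diff[OF intS im])
  have f6: "AE w in M. real_cond_exp M G m w = m w"
    by (rule G.real_cond_exp_F_meas[OF im mG])
  have u2G: "(\<lambda>w. (u w)^2) \<in> borel_measurable G" by measurable
  have f7: "AE w in M. real_cond_exp M G (\<lambda>w. (u w)^2) w = (u w)^2"
    by (rule G.real_cond_exp_F_meas[OF iu2 u2G])
  have f8: "AE w in M. real_cond_exp M G (\<lambda>w. (S w - m w)^2) w \<le> d^2"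
  proof (rule G.real_cond_exp_le_c[OF iSm2])
    show "AE w in M. (S w - m w)^2 \<le> d^2" using md
    proof eventually_elim
      case (elim w)
      then have "\<bar>S w - m w\<bar>^2 \<le> d^2" by (intro power_mono) auto
      then show ?case by simp
    qed
  qed
  show ?thesis unfolding fe using f1 f2 f3 f4 f5 f6 f7 f8
  proof eventually_elim
    case (elim w)
    then have "real_cond_exp M G (\<lambda>w. (S w - m w)^2 + (2 * (u w * (S w - m w)) + (u w)^2)) w
       = real_cond_exp M G (\<lambda>w. (S w - m w)^2) w - (u w)^2"
      by (simp add: u_def power2_eq_square algebra_simps)
    then show ?case using elim(8) zero_le_power2[of "u w"] by linarith
  qed
qed

lemma subalg_vimage:
  assumes "f \<in> measurable M N"
  shows "subalgebra M (vimage_algebra (space M) f N)"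
  unfolding subalgebra_def
proof
  show "space (vimage_algebra (space M) f N) = space M" by simp
  have "f \<in> space M \<rightarrow> space N" using measurable_space[OF assms] by auto
  then show "sets (vimage_algebra (space M) f N) \<subseteq> sets M"
    using measurable_sets[OF assms] by (auto simp: sets_vimage_algebra2)
qed

lemma subalg_vimage_comp:
  assumes g[measurable]: "g \<in> borel_measurable borel" and eq: "\<And>w. w \<in> space M \<Longrightarrow> T w = g (S w)"
  shows "subalgebra (vimage_algebra (space M) S borel) (vimage_algebra (space M) T borel)"
  unfolding subalgebra_def
proof
  show "space (vimage_algebra (space M) T borel) = space (vimage_algebra (space M) S borel)" by simp
  show "sets (vimage_algebra (space M) T borel) \<subseteq> sets (vimage_algebra (space M) S borel)"
  proof
    fix X assume "X \<in> sets (vimage_algebra (space M) T borel)"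
    then obtain A where A: "A \<in> sets borel" "X = T -` A \<inter> space M"
      by (auto simp: sets_vimage_algebra2)
    have "g -` A \<in> sets borel" using measurable_sets[OF g A(1)] by simp
    moreover have "X = S -` (g -` A) \<inter> space M" using A(2) eq by auto
    ultimately show "X \<in> sets (vimage_algebra (space M) S borel)"
      by (auto simp: sets_vimage_algebra2)
  qed
qed

lemma bin_mean_in:
  assumes P: "prob_space M" and Sm[measurable]: "S \<in> borel_measurable M"
    and B: "is_interval B" "B \<subseteq> {0..1}"
    and pos: "measure M (S -` B \<inter> space M) \<noteq> 0"
  shows "bin_mean M S B \<in> B"
proof (rule ccontr)
  interpret P: prob_space M by fact
  assume nm: "bin_mean M S B \<notin> B"
  define A where "A = S -` B \<inter> space M"
  define \<mu> where "\<mu> = measure M A"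
  define c where "c = bin_mean M S B"
  have Bb[measurable]: "B \<in> sets borel" using real_interval_borel_measurable[OF B(1)] .
  have Am[measurable]: "A \<in> sets M" unfolding A_def by measurable
  have mu: "\<mu> > 0" using pos unfolding \<mu>_def A_def by (simp add: zero_less_measure_iff)
  have intA: "integrable M (\<lambda>w. indicator A w * S w)"
  proof (rule P.integrable_const_bound[where B=1])
    show "AE w in M. norm (indicator A w * S w) \<le> 1"
      using B(2) by (intro AE_I2) (auto simp: A_def indicator_def)
  qed simp
  have I: "(LINT w:A|M. S w) = (\<integral>w. indicator A w * S w \<partial>M)"
    by (simp add: set_lebesgue_integral_def)
  have cdef: "c * \<mu> = (\<integral>w. indicator A w * S w \<partial>M)"
    using mu unfolding c_def bin_mean_def A_def[symmetric] \<mu>_def[symmetric] I by simp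
  have iA: "integrable M (\<lambda>w. indicator A w * c)"
    by (intro integrable_mult_left integrable_real_indicator) (auto simp: P.emeasure_finite less_top[symmetric])
  have intd: "integrable M (\<lambda>w. indicator A w * (S w - c))"
    using Bochner_Integration.integrable_diff[OF intA iA] by (simp add: algebra_simps)
  have "(\<integral>w. indicator A w * (S w - c) \<partial>M) = (\<integral>w. indicator A w * S w \<partial>M) - (\<integral>w. indicator A w * c \<partial>M)"
    using Bochner_Integration.integrable_diff[OF intA iA] intA iA by (simp add: algebra_simps)
  also have "(\<integral>w. indicator A w * c \<partial>M) = c * \<mu>"
    unfolding \<mu>_def by simp
  finally have z: "(\<integral>w. indicator A w * (S w - c) \<partial>M) = 0" using cdef by simp
  have side: "(\<forall>b\<in>B. c < b) \<or> (\<forall>b\<in>B. b < c)"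
  proof (rule ccontr)
    assume "\<not> ?thesis"
    then obtain b1 b2 where "b1 \<in> B" "b2 \<in> B" "b1 \<le> c" "c \<le> b2" by auto
    then have "c \<in> B" using mem_is_interval_1_I[OF B(1)] by blast
    then show False using nm c_def by simp
  qed
  have AEnot: "AE w in M. w \<notin> A"
  proof -
    have "AE w in M. indicator A w * (S w - c) = 0 \<or> indicator A w * (c - S w) = 0"
    proof (cases "\<forall>b\<in>B. c < b")
      case True
      have "AE w in M. indicator A w * (S w - c) = 0"
        using integral_nonneg_eq_0_iff_AE[OF intd] z True by (auto simp: A_def indicator_def less_imp_le)
      then show ?thesis by eventually_elim auto
    next
      case False
      then have F: "\<forall>b\<in>B. b < c" using side by auto
      have intd': "integrable M (\<lambda>w. indicator A w * (c - S w))"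
        using integrable_minus[OF intd] by (simp add: algebra_simps)
      have z': "(\<integral>w. indicator A w * (c - S w) \<partial>M) = 0"
        using z integral_minus[of M "\<lambda>w. indicator A w * (S w - c)"] by (simp add: algebra_simps)
      have "AE w in M. indicator A w * (c - S w) = 0"
        using integral_nonneg_eq_0_iff_AE[OF intd'] z' F by (auto simp: A_def indicator_def less_imp_le)
      then show ?thesis by eventually_elim auto
    qed
    then show ?thesis
    proof eventually_elim
      case (elim w)
      show ?case
      proof
        assume "w \<in> A"
        then have "S w \<in> B" by (simp add: A_def)
        then have "S w \<noteq> c" using nm c_def by auto
        with elim \<open>w \<in> A\<close> show False by auto
      qed
    qed
  qed
  moreover have "{x\<in>space M. \<not> x \<notin> A} = A" by (auto simp: A_def)
  ultimately have "emeasure M A = 0" using AE_iff_measurable[OF Am, of "\<lambda>w. w \<notin> A"] by auto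
  then show False using mu unfolding \<mu>_def by (simp add: measure_def)
qed



lemma pw_bounds:
  fixes v c k :: real
  assumes v: "0 \<le> v" "v \<le> 1" and c: "0 \<le> c" "c \<le> 1"
    and k: "\<bar>k\<bar> \<le> sqrt v * sqrt (c * (1 - c))"
  shows "- (sqrt v * (2 * sqrt (c * (1 - c)) + sqrt v)) \<le> 2 * k - v"
    "2 * k - v \<le> sqrt v * (2 * sqrt (c * (1 - c)) - sqrt v)"
    "\<And>d. 0 \<le> d \<Longrightarrow> v \<le> d^2 \<Longrightarrow> 2 * k - v \<le> 2 * d * sqrt (c * (1 - c))"
    "\<And>d. 0 \<le> d \<Longrightarrow> v \<le> d^2 \<Longrightarrow> - (2 * d * sqrt (c * (1 - c))) - d^2 \<le> 2 * k - v"
    "\<bar>sqrt v * (2 * sqrt (c * (1 - c)) + sqrt v)\<bar> \<le> 3"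
    "\<bar>sqrt v * (2 * sqrt (c * (1 - c)) - sqrt v)\<bar> \<le> 3"
    "\<bar>sqrt (c * (1 - c))\<bar> \<le> 1"
proof -
  define t where "t = sqrt v"
  define s where "s = sqrt (c * (1 - c))"
  have vt: "v = t^2" unfolding t_def using v by simp
  have t0: "0 \<le> t" "t \<le> 1" unfolding t_def using v by auto
  have cc: "0 \<le> c * (1 - c)" "c * (1 - c) \<le> 1" using c by (auto intro: mult_le_one mult_nonneg_nonneg)
  have s0: "0 \<le> s" "s \<le> 1" unfolding s_def using cc by auto
  have kk: "\<bar>k\<bar> \<le> t * s" using k unfolding t_def s_def .
  show "- (sqrt v * (2 * sqrt (c * (1 - c)) + sqrt v)) \<le> 2 * k - v"
    unfolding t_def[symmetric] s_def[symmetric] vt using kk t0 by (simp add: power2_eq_square algebra_simps abs_le_iff)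
  show "2 * k - v \<le> sqrt v * (2 * sqrt (c * (1 - c)) - sqrt v)"
    unfolding t_def[symmetric] s_def[symmetric] vt using kk t0 by (simp add: power2_eq_square algebra_simps abs_le_iff)
  show "2 * k - v \<le> 2 * d * sqrt (c * (1 - c))" if "0 \<le> d" "v \<le> d^2" for d
  proof -
    have "t \<le> d" unfolding t_def using that real_sqrt_le_mono[OF that(2)] by simp
    then have "t * s \<le> d * s" using s0 by (intro mult_right_mono) auto
    then show ?thesis unfolding s_def[symmetric] vt power2_eq_square
      using kk t0 mult_nonneg_nonneg[OF t0(1) t0(1)] abs_ge_self[of k] by linarith
  qed
  show "- (2 * d * sqrt (c * (1 - c))) - d^2 \<le> 2 * k - v" if "0 \<le> d" "v \<le> d^2" for d
  proof -
    have "t \<le> d" unfolding t_def using that real_sqrt_le_mono[OF that(2)] by simp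
    then have "t * s \<le> d * s" using s0 by (intro mult_right_mono) auto
    then show ?thesis unfolding s_def[symmetric] using kk t0 that by (simp add: power2_eq_square)
  qed
  have "t * (2 * s + t) \<le> 1 * (2 * 1 + 1)" using t0 s0 by (intro mult_mono) auto
  then show "\<bar>sqrt v * (2 * sqrt (c * (1 - c)) + sqrt v)\<bar> \<le> 3"
    unfolding t_def[symmetric] s_def[symmetric] using t0 s0 by simp
  have "t * \<bar>2 * s - t\<bar> \<le> 1 * 2" using t0 s0 by (intro mult_mono) auto
  then show "\<bar>sqrt v * (2 * sqrt (c * (1 - c)) - sqrt v)\<bar> \<le> 3"
    unfolding t_def[symmetric] s_def[symmetric] using t0 s0 by (simp add: abs_mult)
  show "\<bar>sqrt (c * (1 - c))\<bar> \<le> 1" using s0 unfolding s_def by simp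
qed

lemma sum_single:
  assumes "finite BB" "B0 \<in> BB" "x \<in> B0" "\<And>B. B \<in> BB \<Longrightarrow> x \<in> B \<Longrightarrow> B = B0"
  shows "(\<Sum>B\<in>BB. indicator B x * c B) = (c B0 :: real)"
proof -
  have "(\<Sum>B\<in>BB. indicator B x * c B) = indicator B0 x * c B0 + (\<Sum>B\<in>BB - {B0}. indicator B x * c B)"
    by (rule sum.remove[OF assms(1,2)])
  also have "(\<Sum>B\<in>BB - {B0}. indicator B x * c B) = 0"
    using assms(4) by (intro sum.neutral) (auto simp: indicator_def)
  finally show ?thesis using assms(3) by simp
qed

theorem corollary1:
  fixes M :: "'a measure" and N :: "'x measure"
    and X :: "'a \<Rightarrow> 'x" and Y :: "'a \<Rightarrow> real" and f :: "'x \<Rightarrow> real"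
    and \<B> :: "real set set" and Nb :: nat
    and Q S C SB CB CL GL :: "'a \<Rightarrow> real" and CLi GLi :: real
  assumes "prob_space M"
    and "X \<in> measurable M N"
    and "Y \<in> borel_measurable M" and "\<forall>w\<in>space M. Y w \<in> {0, 1}"
    and "f \<in> borel_measurable N" and "\<forall>x\<in>space N. f x \<in> {0..1}"
    and "bin_partition \<B>"
  defines "Q \<equiv> real_cond_exp M (vimage_algebra (space M) X N) (\<lambda>w. indicator {1} (Y w))"
    and "S \<equiv> (\<lambda>w. f (X w))"
    and "C \<equiv> real_cond_exp M (gen_sigma M S) Q"
    and "SB \<equiv> binned M \<B> S"
    and "CB \<equiv> real_cond_exp M (gen_sigma M SB) Q"
    and "CLi \<equiv> - (\<integral>w. cond_var M (gen_sigma M SB) (\<lambda>v. S v - C v) w \<partial>M)"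
    and "GLi \<equiv> (\<integral>w. cond_var M (gen_sigma M SB) C w \<partial>M)"
  shows "- (\<integral>w. sqrt (cond_var M (gen_sigma M SB) S w) *
              (2 * sqrt (CB w * (1 - CB w)) + sqrt (cond_var M (gen_sigma M SB) S w)) \<partial>M)
           \<le> CLi + GLi
       \<and> CLi + GLi \<le> (\<integral>w. sqrt (cond_var M (gen_sigma M SB) S w) *
              (2 * sqrt (CB w * (1 - CB w)) - sqrt (cond_var M (gen_sigma M SB) S w)) \<partial>M)
       \<and> ((Nb > 0 \<and> (\<forall>B\<in>\<B>. Sup B - Inf B = 1 / real Nb)) \<longrightarrow>
            - (1 / real Nb) * (\<integral>w. sqrt (CB w * (1 - CB w)) \<partial>M) - 1 / (4 * (real Nb)\<^sup>2)
              \<le> CLi + GLi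
          \<and> CLi + GLi \<le> (1 / real Nb) * (\<integral>w. sqrt (CB w * (1 - CB w)) \<partial>M))"
proof -
  interpret P: prob_space M by fact
  have Xm[measurable]: "X \<in> measurable M N" by fact
  have fm[measurable]: "f \<in> borel_measurable N" by fact
  have Ym[measurable]: "Y \<in> borel_measurable M" by fact
  have Sm[measurable]: "S \<in> borel_measurable M" unfolding S_def by measurable
  have S01: "\<And>w. w \<in> space M \<Longrightarrow> 0 \<le> S w \<and> S w \<le> 1"
    using assms(6) measurable_space[OF Xm] unfolding S_def by auto
  have Sb: "AE w in M. 0 \<le> S w \<and> S w \<le> 1" using S01 by (intro AE_I2) auto
  have fin: "finite \<B>" and intv: "\<And>B. B \<in> \<B> \<Longrightarrow> is_interval B"
    and disj: "disjoint \<B>" and un: "\<Union>\<B> = {0..1}"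
    using assms(7) unfolding bin_partition_def by auto
  have Bsub: "\<And>B. B \<in> \<B> \<Longrightarrow> B \<subseteq> {0..1}" using un by auto
  have Bborel: "\<And>B. B \<in> \<B> \<Longrightarrow> B \<in> sets borel" using intv real_interval_borel_measurable by blast
  have uniq: "\<And>B B' x. B \<in> \<B> \<Longrightarrow> B' \<in> \<B> \<Longrightarrow> x \<in> B \<Longrightarrow> x \<in> B' \<Longrightarrow> B' = B"
    using disj unfolding pairwise_def disjnt_def by blast
  have ex: "\<And>x. x \<in> {0..1} \<Longrightarrow> \<exists>B\<in>\<B>. x \<in> B" using un by blast
  define g where "g x = (\<Sum>B\<in>\<B>. indicator B x * bin_mean M S B)" for x
  have gm[measurable]: "g \<in> borel_measurable borel"
    unfolding g_def by (intro borel_measurable_sum borel_measurable_times borel_measurable_indicator Bborel) auto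
  have SBeq: "\<And>w. w \<in> space M \<Longrightarrow> SB w = g (S w)"
  proof -
    fix w assume w: "w \<in> space M"
    then obtain B0 where B0: "B0 \<in> \<B>" "S w \<in> B0" using ex S01 by force
    have "(THE B. B \<in> \<B> \<and> S w \<in> B) = B0"
      using B0 uniq by (intro the_equality) auto
    then have "SB w = bin_mean M S B0" unfolding SB_def binned_def by simp
    also have "\<dots> = g (S w)" unfolding g_def
      using B0 uniq by (intro sum_single[symmetric] fin) auto
    finally show "SB w = g (S w)" .
  qed
  have SBm[measurable]: "SB \<in> borel_measurable M"
    using measurable_cong[of M SB "\<lambda>w. g (S w)"] SBeq by simp
  define G where "G = gen_sigma M SB"
  have subG: "subalgebra M G" unfolding G_def gen_sigma_def by (rule subalg_vimage) simp
  have subS: "subalgebra M (gen_sigma M S)" unfolding gen_sigma_def by (rule subalg_vimage) simp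
  have subSG: "subalgebra (gen_sigma M S) G" unfolding G_def gen_sigma_def
    by (rule subalg_vimage_comp[OF gm SBeq])
  have subX: "subalgebra M (vimage_algebra (space M) X N)" by (rule subalg_vimage[OF Xm])
  interpret GX: finite_measure_subalgebra M "vimage_algebra (space M) X N"
    using subX by (simp add: finite_measure_subalgebra_def finite_measure_subalgebra_axioms_def P.finite_measure_axioms)
  interpret GS: finite_measure_subalgebra M "gen_sigma M S"
    using subS by (simp add: finite_measure_subalgebra_def finite_measure_subalgebra_axioms_def P.finite_measure_axioms)
  interpret GG: finite_measure_subalgebra M G
    using subG by (simp add: finite_measure_subalgebra_def finite_measure_subalgebra_axioms_def P.finite_measure_axioms)
  have indm[measurable]: "(\<lambda>w. indicator {1} (Y w) :: real) \<in> borel_measurable M" by measurable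
  have intI: "integrable M (\<lambda>w. indicator {1} (Y w) :: real)"
    by (rule P.integrable_const_bound[where B=1]) (auto simp: indicator_def)
  have Qm[measurable]: "Q \<in> borel_measurable M" unfolding Q_def by simp
  have intQ: "integrable M Q" unfolding Q_def by (rule GX.real_cond_exp_int(1)[OF intI])
  have "AE w in M. 0 \<le> Q w" unfolding Q_def
    by (rule GX.real_cond_exp_ge_c[OF intI]) (auto simp: indicator_def)
  moreover have "AE w in M. Q w \<le> 1" unfolding Q_def
    by (rule GX.real_cond_exp_le_c[OF intI]) (auto simp: indicator_def)
  ultimately have Qb: "AE w in M. 0 \<le> Q w \<and> Q w \<le> 1" by eventually_elim auto
  have Cm[measurable]: "C \<in> borel_measurable M" unfolding C_def by simp
  have "AE w in M. 0 \<le> C w" unfolding C_def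
    by (rule GS.real_cond_exp_ge_c[OF intQ]) (use Qb in auto)
  moreover have "AE w in M. C w \<le> 1" unfolding C_def
    by (rule GS.real_cond_exp_le_c[OF intQ]) (use Qb in auto)
  ultimately have Cb: "AE w in M. 0 \<le> C w \<and> C w \<le> 1" by eventually_elim auto
  have CBm[measurable]: "CB \<in> borel_measurable M" unfolding CB_def by simp
  have CBe: "AE w in M. real_cond_exp M G C w = CB w"
    unfolding C_def CB_def G_def[symmetric]
    by (rule GG.real_cond_exp_nested_subalg[OF subS subSG intQ])
  define K where "K \<equiv> real_cond_exp M G (\<lambda>w. (S w - real_cond_exp M G S w) * (C w - real_cond_exp M G C w))"
  note VD = var_decomp[OF assms(1) subG Sm Cm Sb Cb, folded K_def]
  define VS where "VS = cond_var M G S"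
  have VSm[measurable]: "VS \<in> borel_measurable M" unfolding VS_def cond_var_def by simp
  have Km[measurable]: "K \<in> borel_measurable M" unfolding K_def by simp
  have sum_eq: "CLi + GLi = (\<integral>w. 2 * K w - VS w \<partial>M)"
    unfolding CLi_def GLi_def G_def[symmetric] VS_def using VD(3) by simp
  have pw: "AE w in M. 0 \<le> VS w \<and> VS w \<le> 1 \<and> 0 \<le> CB w \<and> CB w \<le> 1 \<and>
      \<bar>K w\<bar> \<le> sqrt (VS w) * sqrt (CB w * (1 - CB w))"
    using VD(4) VD(5) CBe unfolding VS_def[symmetric]
  proof eventually_elim
    case (elim w)
    then have c: "0 \<le> CB w" "CB w \<le> 1" and vc: "cond_var M G C w \<le> CB w * (1 - CB w)" by auto
    have "K w ^ 2 \<le> VS w * cond_var M G C w" using elim by auto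
    also have "\<dots> \<le> VS w * (CB w * (1 - CB w))" using elim vc by (intro mult_left_mono) auto
    finally have "sqrt (K w ^ 2) \<le> sqrt (VS w * (CB w * (1 - CB w)))" by (rule real_sqrt_le_mono)
    then have "\<bar>K w\<bar> \<le> sqrt (VS w) * sqrt (CB w * (1 - CB w))" by (simp add: real_sqrt_mult)
    then show ?case using elim c by auto
  qed
  have iL: "integrable M (\<lambda>w. sqrt (VS w) * (2 * sqrt (CB w * (1 - CB w)) + sqrt (VS w)))"
  proof (rule P.integrable_const_bound[where B=3])
    show "AE w in M. norm (sqrt (VS w) * (2 * sqrt (CB w * (1 - CB w)) + sqrt (VS w))) \<le> 3"
      using pw by eventually_elim (use pw_bounds(5) in auto)
  qed simp
  have iU: "integrable M (\<lambda>w. sqrt (VS w) * (2 * sqrt (CB w * (1 - CB w)) - sqrt (VS w)))"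
  proof (rule P.integrable_const_bound[where B=3])
    show "AE w in M. norm (sqrt (VS w) * (2 * sqrt (CB w * (1 - CB w)) - sqrt (VS w))) \<le> 3"
      using pw by eventually_elim (use pw_bounds(6) in auto)
  qed simp
  have isq: "integrable M (\<lambda>w. sqrt (CB w * (1 - CB w)))"
  proof (rule P.integrable_const_bound[where B=1])
    show "AE w in M. norm (sqrt (CB w * (1 - CB w))) \<le> 1"
      using pw by eventually_elim (use pw_bounds(7) in auto)
  qed simp
  have iM: "integrable M (\<lambda>w. 2 * K w - VS w)" using VD(1,2) unfolding VS_def by simp
  have part1: "- (\<integral>w. sqrt (VS w) * (2 * sqrt (CB w * (1 - CB w)) + sqrt (VS w)) \<partial>M) \<le> CLi + GLi"
  proof -
    have "(\<integral>w. - (sqrt (VS w) * (2 * sqrt (CB w * (1 - CB w)) + sqrt (VS w))) \<partial>M) \<le> (\<integral>w. 2 * K w - VS w \<partial>M)"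
    proof (rule integral_mono_AE[OF _ iM])
      show "integrable M (\<lambda>w. - (sqrt (VS w) * (2 * sqrt (CB w * (1 - CB w)) + sqrt (VS w))))"
        using iL by simp
      show "AE w in M. - (sqrt (VS w) * (2 * sqrt (CB w * (1 - CB w)) + sqrt (VS w))) \<le> 2 * K w - VS w"
        using pw by eventually_elim (rule pw_bounds(1), auto)
    qed
    then show ?thesis unfolding sum_eq by simp
  qed
  have part2: "CLi + GLi \<le> (\<integral>w. sqrt (VS w) * (2 * sqrt (CB w * (1 - CB w)) - sqrt (VS w)) \<partial>M)"
    unfolding sum_eq
  proof (rule integral_mono_AE[OF iM iU])
    show "AE w in M. 2 * K w - VS w \<le> sqrt (VS w) * (2 * sqrt (CB w * (1 - CB w)) - sqrt (VS w))"
      using pw by eventually_elim (rule pw_bounds(2), auto)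
  qed
  have part3: "- (1 / real Nb) * (\<integral>w. sqrt (CB w * (1 - CB w)) \<partial>M) - 1 / (4 * (real Nb)\<^sup>2) \<le> CLi + GLi
          \<and> CLi + GLi \<le> (1 / real Nb) * (\<integral>w. sqrt (CB w * (1 - CB w)) \<partial>M)"
    if Nb0: "Nb > 0" and wid: "\<forall>B\<in>\<B>. Sup B - Inf B = 1 / real Nb"
  proof -
    define d where "d = 1 / (2 * real Nb)"
    have d0: "0 \<le> d" unfolding d_def by simp
    define h where "h x = (\<Sum>B\<in>\<B>. indicator B x * ((Inf B + Sup B) / 2))" for x
    have hm[measurable]: "h \<in> borel_measurable borel"
      unfolding h_def by (intro borel_measurable_sum borel_measurable_times borel_measurable_indicator Bborel) auto
    define m where "m w = h (SB w)" for w
    have mG: "m \<in> borel_measurable G"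
    proof -
      have "SB \<in> measurable G borel" unfolding G_def gen_sigma_def
        by (rule measurable_vimage_algebra1) simp
      then have "h \<circ> SB \<in> borel_measurable G" by (rule measurable_comp) (rule hm)
      then show ?thesis unfolding m_def comp_def .
    qed
    have md: "AE w in M. \<bar>S w - m w\<bar> \<le> d"
    proof -
      have "AE w in M. \<forall>B\<in>\<B>. S w \<in> B \<longrightarrow> \<bar>S w - m w\<bar> \<le> d"
      proof (rule AE_finite_allI[OF fin])
        fix B assume B: "B \<in> \<B>"
        have Bm[measurable]: "B \<in> sets borel" using Bborel[OF B] .
        have Am: "S -` B \<inter> space M \<in> sets M" by measurable
        show "AE w in M. S w \<in> B \<longrightarrow> \<bar>S w - m w\<bar> \<le> d"
        proof (cases "measure M (S -` B \<inter> space M) = 0")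
          case True
          then have "S -` B \<inter> space M \<in> null_sets M"
            using Am by (simp add: null_sets_def P.emeasure_eq_measure)
          then have "AE w in M. w \<notin> S -` B \<inter> space M" by (rule AE_not_in)
          then show ?thesis using AE_space by eventually_elim auto
        next
          case False
          have bmB: "bin_mean M S B \<in> B"
            by (rule bin_mean_in[OF assms(1) Sm intv[OF B] Bsub[OF B] False])
          have hB: "h (bin_mean M S B) = (Inf B + Sup B) / 2"
            unfolding h_def using bmB B uniq by (intro sum_single fin) auto
          show ?thesis
          proof (rule AE_I2, rule impI)
            fix w assume w: "w \<in> space M" and Sw: "S w \<in> B"
            have "g (S w) = bin_mean M S B"
              unfolding g_def using Sw B uniq by (intro sum_single fin) auto
            then have mw: "m w = (Inf B + Sup B) / 2" unfolding m_def using SBeq[OF w] hB by simp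
            have bb: "bdd_below B" "bdd_above B" using Bsub[OF B]
              by (meson bdd_below_Icc bdd_below_mono, meson bdd_above_Icc bdd_above_mono)
            have "Inf B \<le> S w" "S w \<le> Sup B" using Sw bb by (auto intro: cInf_lower cSup_upper)
            moreover have "Sup B - Inf B = 2 * d" using wid B unfolding d_def by simp
            ultimately show "\<bar>S w - m w\<bar> \<le> d" unfolding mw by (simp add: abs_le_iff field_simps)
          qed
        qed
      qed
      then show ?thesis using Sb
      proof eventually_elim
        case (elim w)
        then obtain B where "B \<in> \<B>" "S w \<in> B" using ex by force
        then show ?case using elim by auto
      qed
    qed
    have VSb: "AE w in M. VS w \<le> d^2"
      unfolding VS_def by (rule var_bound[OF assms(1) subG Sm Sb mG md])
    have 2: "2 * d = 1 / real Nb" unfolding d_def using Nb0 by simp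
    have 3: "d^2 = 1 / (4 * (real Nb)\<^sup>2)" unfolding d_def by (simp add: power2_eq_square)
    have up: "(\<integral>w. 2 * K w - VS w \<partial>M) \<le> (\<integral>w. 2 * d * sqrt (CB w * (1 - CB w)) \<partial>M)"
    proof (rule integral_mono_AE[OF iM])
      show "integrable M (\<lambda>w. 2 * d * sqrt (CB w * (1 - CB w)))" using isq by simp
      show "AE w in M. 2 * K w - VS w \<le> 2 * d * sqrt (CB w * (1 - CB w))"
        using pw VSb by eventually_elim (rule pw_bounds(3)[OF _ _ _ _ _ d0], auto)
    qed
    have lo: "(\<integral>w. - (2 * d * sqrt (CB w * (1 - CB w))) - d^2 \<partial>M) \<le> (\<integral>w. 2 * K w - VS w \<partial>M)"
    proof (rule integral_mono_AE[OF _ iM])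
      show "integrable M (\<lambda>w. - (2 * d * sqrt (CB w * (1 - CB w))) - d^2)" using isq by simp
      show "AE w in M. - (2 * d * sqrt (CB w * (1 - CB w))) - d^2 \<le> 2 * K w - VS w"
        using pw VSb by eventually_elim (rule pw_bounds(4)[OF _ _ _ _ _ d0], auto)
    qed
    have "(\<integral>w. - (2 * d * sqrt (CB w * (1 - CB w))) - d^2 \<partial>M)
        = - (2 * d) * (\<integral>w. sqrt (CB w * (1 - CB w)) \<partial>M) - d^2"
      using isq by (simp add: P.prob_space)
    moreover have "(\<integral>w. 2 * d * sqrt (CB w * (1 - CB w)) \<partial>M) = (2 * d) * (\<integral>w. sqrt (CB w * (1 - CB w)) \<partial>M)"
      by simp
    ultimately show ?thesis using up lo unfolding sum_eq 2 3 by simp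
  qed
  show ?thesis using part1 part2 part3 unfolding VS_def G_def by blast
qed

end
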